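(* Let $n\ge 1$ and let $Y$ be a semistandard Young tableau on the alphabet $\mathcal{A}_n$ which is an $sp_{2n}$-highest weight tableau. Then for every $1\le i\le n$, every entry of $Y$ equal to $i$ lies in the $i$-th row, and every entry equal to $\bar i$ lies in a row strictly below the $i$-th row.
   Context: $\mathcal{A}_n=\{1<2<\dots<n<\bar n<\dots<\bar 2<\bar 1\}$. Young diagrams are in English convention (row 1 on top). Semistandard: entries weakly increase along rows and strictly increase down columns. The reading of $Y$ is the word $a_1\cdots a_N$ obtained by reading each column top to bottom and concatenating columns from rightmost to leftmost. Crystal $B_n$ on $\mathcal{A}_n$: for $1\le i<n$, $\tilde f_i(i)=i+1$, $\tilde f_i(\overline{i+1})=\bar i$; $\tilde f_n(n)=\bar n$; $\tilde f_i(b)=0$ otherwise; $\tilde e_i$ is the partial inverse. $\varepsilon_i(b)=\max\{k:\tilde e_i^k b\ne0\}$, $\varphi_i(b)=\max\{k:\tilde f_i^kb\neq 0\}$. Tensor rule: $\tilde e_i(b_1\otimes b_2)=\tilde e_i(b_1)\otimes b_2$ if $\varphi_i(b_1)\ge\varepsilon_i(b_2)$, else $b_1\otimes\tilde e_i(b_2)$; $\tilde f_i(b_1\otimes b_2)=\tilde f_i(b_1)\otimes b_2$ if $\varphi_i(b_1)>\varepsilon_i(b_2)$, else $b_1\otimes\tilde f_i(b_2)$; iterated as $a_1\otimes\cdots\otimes a_N=(a_1\otimes\cdots\otimes a_{N-1})\otimes a_N$. $Y$ is an $sp_{2n}$-highest weight tableau if $\tilde e_i(a_1\otimes\cdots\otimes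 a_N)=0$ in $B_n^{\otimes N}$ for all $1\le i\le n$. *)

theory Defs
  imports Main
begin

text \<open>Letters of the alphabet A_n: Unb i stands for i, Bar i stands for the barred letter.
  A letter is in A_n iff 1 <= i <= n.\<close>
datatype letter = Unb nat | Bar nat

definition in_alph :: "nat \<Rightarrow> letter \<Rightarrow> bool" where
  "in_alph n a = (case a of Unb i \<Rightarrow> 1 \<le> i \<and> i \<le> n | Bar i \<Rightarrow> 1 \<le> i \<and> i \<le> n)"

text \<open>Position in the total order 1 < 2 < ... < n < bar n < ... < bar 1.\<close>
definition rank :: "nat \<Rightarrow> letter \<Rightarrow> nat" where
  "rank n a = (case a of Unb i \<Rightarrow> i | Bar i \<Rightarrow> 2 * n + 1 - i)"

definition lt_letter :: "nat \<Rightarrow> letter \<Rightarrow> letter \<Rightarrow> bool" where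
  "lt_letter n a b = (rank n a < rank n b)"

definition le_letter :: "nat \<Rightarrow> letter \<Rightarrow> letter \<Rightarrow> bool" where
  "le_letter n a b = (rank n a \<le> rank n b)"

text \<open>Young tableaux as lists of rows (row 1 on top, English convention).\<close>
definition is_young_tableau :: "nat \<Rightarrow> letter list list \<Rightarrow> bool" where
  "is_young_tableau n Y =
     ((\<forall>r < length Y. Y ! r \<noteq> []) \<and>
      (\<forall>r s. r < s \<and> s < length Y \<longrightarrow> length (Y ! s) \<le> length (Y ! r)) \<and>
      (\<forall>r < length Y. \<forall>a \<in> set (Y ! r). in_alph n a))"

definition semistandard :: "nat \<Rightarrow> letter list list \<Rightarrow> bool" where
  "semistandard n Y =
     (is_young_tableau n Y \<and>
      (\<forall>r < length Y. \<forall>c. Suc c < length (Y ! r) \<longrightarrow> le_letter n (Y ! r ! c) (Y ! r ! Suc c)) \<and>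
      (\<forall>r c. Suc r < length Y \<and> c < length (Y ! Suc r) \<longrightarrow> lt_letter n (Y ! r ! c) (Y ! Suc r ! c)))"

definition ncols :: "letter list list \<Rightarrow> nat" where
  "ncols Y = (if Y = [] then 0 else length (hd Y))"

definition column :: "letter list list \<Rightarrow> nat \<Rightarrow> letter list" where
  "column Y c = [Y ! r ! c. r \<leftarrow> [0..<length Y], c < length (Y ! r)]"

definition reading :: "letter list list \<Rightarrow> letter list" where
  "reading Y = concat (map (column Y) (rev [0..<ncols Y]))"

definition f_l :: "nat \<Rightarrow> nat \<Rightarrow> letter \<Rightarrow> letter option" where
  "f_l n i a =
    (if 1 \<le> i \<and> i < n then
       (if a = Unb i then Some (Unb (i+1)) else if a = Bar (i+1) then Some (Bar i) else None)
     else if i = n then (if a = Unb n then Some (Bar n) else None)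
     else None)"

definition e_l :: "nat \<Rightarrow> nat \<Rightarrow> letter \<Rightarrow> letter option" where
  "e_l n i a =
    (if 1 \<le> i \<and> i < n then
       (if a = Unb (i+1) then Some (Unb i) else if a = Bar i then Some (Bar (i+1)) else None)
     else if i = n then (if a = Bar n then Some (Unb n) else None)
     else None)"

definition iter_opt :: "('a \<Rightarrow> 'a option) \<Rightarrow> nat \<Rightarrow> 'a \<Rightarrow> 'a option" where
  "iter_opt g k x = ((\<lambda>y. Option.bind y g) ^^ k) (Some x)"

definition maxit :: "('a \<Rightarrow> 'a option) \<Rightarrow> 'a \<Rightarrow> nat" where
  "maxit g x = (GREATEST k. iter_opt g k x \<noteq> None)"

definition eps_l :: "nat \<Rightarrow> nat \<Rightarrow> letter \<Rightarrow> nat" where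
  "eps_l n i a = maxit (e_l n i) a"

definition phi_l :: "nat \<Rightarrow> nat \<Rightarrow> letter \<Rightarrow> nat" where
  "phi_l n i a = maxit (f_l n i) a"

text \<open>Crystal operators on words a_1 ... a_N = (a_1 ... a_{N-1}) tensor a_N, for words of
  length N, defined by recursion on N via the tensor rule; epsilon and phi of the prefix
  are the maximal numbers of applications of e and f.\<close>
primrec ops :: "nat \<Rightarrow> nat \<Rightarrow>
    (nat \<Rightarrow> letter list \<Rightarrow> letter list option) \<times> (nat \<Rightarrow> letter list \<Rightarrow> letter list option)" where
  "ops n 0 = ((\<lambda>i w. None), (\<lambda>i w. None))"
| "ops n (Suc N) =
    (let eP = fst (ops n N); fP = snd (ops n N) in
     ((\<lambda>i w. if w = [] then None else
         (let u = butlast w; a = last w in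
          if maxit (fP i) u \<ge> eps_l n i a
          then map_option (\<lambda>u'. u' @ [a]) (eP i u)
          else map_option (\<lambda>a'. u @ [a']) (e_l n i a))),
      (\<lambda>i w. if w = [] then None else
         (let u = butlast w; a = last w in
          if maxit (fP i) u > eps_l n i a
          then map_option (\<lambda>u'. u' @ [a]) (fP i u)
          else map_option (\<lambda>a'. u @ [a']) (f_l n i a)))))"

definition e_word :: "nat \<Rightarrow> nat \<Rightarrow> letter list \<Rightarrow> letter list option" where
  "e_word n i w = fst (ops n (length w)) i w"

definition f_word :: "nat \<Rightarrow> nat \<Rightarrow> letter list \<Rightarrow> letter list option" where
  "f_word n i w = snd (ops n (length w)) i w"

definition sp_highest_weight :: "nat \<Rightarrow> letter list list \<Rightarrow> bool" where
  "sp_highest_weight n Y = (\<forall>i. 1 \<le> i \<and> i \<le> n \<longrightarrow> e_word n i (reading Y) = None)"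

end

theory Submission
  imports Defs
begin

lemma iter_none: "((\<lambda>y. Option.bind y (g::'a \<Rightarrow> 'a option)) ^^ k) None = None"
  by (induction k) auto

lemma iter_0[simp]: "iter_opt g 0 x = Some x"
  by (simp add: iter_opt_def)

lemma iter_Suc: "iter_opt g (Suc k) x = (case g x of None \<Rightarrow> None | Some y \<Rightarrow> iter_opt g k y)"
  by (cases "g x") (simp_all add: iter_opt_def funpow_Suc_right iter_none del: funpow.simps)

lemma iter_bound:
  assumes "\<And>x y. g x = Some y \<Longrightarrow> (\<mu> y :: nat) < \<mu> x"
  shows "iter_opt g k x \<noteq> None \<Longrightarrow> k \<le> \<mu> x"
proof (induction k arbitrary: x)
  case 0 then show ?case by simp
next
  case (Suc k)
  then obtain y where y: "g x = Some y" by (cases "g x") (auto simp: iter_Suc)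
  with Suc.prems have "iter_opt g k y \<noteq> None" by (simp add: iter_Suc)
  with Suc.IH have "k \<le> \<mu> y" by blast
  with assms[OF y] show ?case by simp
qed

lemma maxit_step:
  assumes "\<And>x y. g x = Some y \<Longrightarrow> (\<mu> y :: nat) < \<mu> x"
  shows "maxit g x = (case g x of None \<Rightarrow> 0 | Some y \<Rightarrow> Suc (maxit g y))"
proof (cases "g x")
  case None
  have "(GREATEST k. iter_opt g k x \<noteq> None) = 0"
  proof (rule Greatest_equality)
    fix k assume "iter_opt g k x \<noteq> None" then show "k \<le> 0" by (cases k) (auto simp: None iter_Suc)
  qed simp
  then show ?thesis by (simp add: maxit_def None)
next
  case (Some y)
  let ?P = "\<lambda>k. iter_opt g k y \<noteq> None"
  have b: "\<And>k. ?P k \<Longrightarrow> k \<le> \<mu> y" using iter_bound[of g \<mu>, OF assms] by blast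
  have Pm: "?P (maxit g y)" unfolding maxit_def by (rule GreatestI_nat[of _ 0]) (use b in auto)
  have le: "\<And>k. ?P k \<Longrightarrow> k \<le> maxit g y" unfolding maxit_def by (rule Greatest_le_nat) (use b in auto)
  have "(GREATEST k. iter_opt g k x \<noteq> None) = Suc (maxit g y)"
  proof (rule Greatest_equality)
    show "iter_opt g (Suc (maxit g y)) x \<noteq> None" using Pm by (simp add: iter_Suc Some)
    fix k assume "iter_opt g k x \<noteq> None"
    then show "k \<le> Suc (maxit g y)"
      by (cases k) (auto simp: iter_Suc Some intro: le)
  qed
  then show ?thesis by (simp add: maxit_def Some)
qed

lemma e_l_meas: "e_l n i a = Some b \<Longrightarrow> rank n b < rank n a"
  by (auto simp: e_l_def rank_def split: if_splits)

lemma f_l_meas: "f_l n i a = Some b \<Longrightarrow> 2*n+1 - rank n b < 2*n+1 - rank n a"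
  by (auto simp: f_l_def rank_def split: if_splits)

lemma e_l_twice: "e_l n i a = Some b \<Longrightarrow> e_l n i b = None"
  by (auto simp: e_l_def split: if_splits)
lemma f_l_twice: "f_l n i a = Some b \<Longrightarrow> f_l n i b = None"
  by (auto simp: f_l_def split: if_splits)

lemma eps_l_eq: "eps_l n i a = (if e_l n i a = None then 0 else 1)"
  unfolding eps_l_def
  by (subst maxit_step[OF e_l_meas]) (auto split: option.splits simp: maxit_step[OF e_l_meas] e_l_twice)

lemma phi_l_eq: "phi_l n i a = (if f_l n i a = None then 0 else 1)"
  unfolding phi_l_def
  by (subst maxit_step[OF f_l_meas]) (auto split: option.splits simp: maxit_step[OF f_l_meas] f_l_twice)

lemma f_l_props: "f_l n i a = Some b \<Longrightarrow> eps_l n i b = 1 \<and> eps_l n i a = 0 \<and> phi_l n i a = 1 \<and> phi_l n i b = 0"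
  by (auto simp: eps_l_eq phi_l_eq e_l_def f_l_def split: if_splits)

definition EE :: "nat \<Rightarrow> nat \<Rightarrow> nat \<Rightarrow> letter list \<Rightarrow> letter list option" where
  "EE n i N = fst (ops n N) i"
definition FF :: "nat \<Rightarrow> nat \<Rightarrow> nat \<Rightarrow> letter list \<Rightarrow> letter list option" where
  "FF n i N = snd (ops n N) i"

lemma EE_Suc: "EE n i (Suc N) (u@[a]) = (if eps_l n i a \<le> maxit (FF n i N) u
   then map_option (\<lambda>u'. u'@[a]) (EE n i N u) else map_option (\<lambda>a'. u@[a']) (e_l n i a))"
  by (simp add: EE_def FF_def Let_def)

lemma FF_Suc: "FF n i (Suc N) (u@[a]) = (if eps_l n i a < maxit (FF n i N) u
   then map_option (\<lambda>u'. u'@[a]) (FF n i N u) else map_option (\<lambda>a'. u@[a']) (f_l n i a))"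
  by (simp add: EE_def FF_def Let_def)

lemma FF_0: "FF n i 0 w = None" by (simp add: FF_def)
lemma FF_Nil: "FF n i N [] = None" by (cases N) (simp_all add: FF_def Let_def)

definition mu :: "nat \<Rightarrow> letter list \<Rightarrow> nat" where
  "mu n w = sum_list (map (\<lambda>a. 2*n+1 - rank n a) w)"

lemma FF_meas: "FF n i N w = Some w' \<Longrightarrow> mu n w' < mu n w"
proof (induction N arbitrary: w w')
  case 0 then show ?case by (simp add: FF_0)
next
  case (Suc N)
  show ?case
  proof (cases w rule: rev_exhaust)
    case Nil then show ?thesis using Suc.prems by (simp add: FF_Nil)
  next
    case (snoc u a)
    show ?thesis
    proof (cases "eps_l n i a < maxit (FF n i N) u")
      case True
      with Suc.prems snoc obtain u' where "FF n i N u = Some u'" "w' = u'@[a]" by (auto simp: FF_Suc)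
      with Suc.IH show ?thesis by (auto simp: mu_def snoc)
    next
      case False
      with Suc.prems snoc obtain b where "f_l n i a = Some b" "w' = u@[b]" by (auto simp: FF_Suc)
      with f_l_meas[of n i a b] show ?thesis by (auto simp: mu_def snoc)
    qed
  qed
qed

lemma maxit_FF: "maxit (FF n i N) x = (case FF n i N x of None \<Rightarrow> 0 | Some y \<Rightarrow> Suc (maxit (FF n i N) y))"
  by (rule maxit_step[of _ "mu n"]) (rule FF_meas)

lemma lemB: "maxit (FF n i N) v = eps_l n i a + d \<Longrightarrow> maxit (FF n i (Suc N)) (v@[a]) = d + phi_l n i a"
proof (induction d arbitrary: v)
  case 0
  show ?case
  proof (cases "f_l n i a")
    case None
    then have "FF n i (Suc N) (v@[a]) = None" using 0 by (simp add: FF_Suc)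
    then show ?thesis using None by (simp add: maxit_FF[of n i "Suc N"] phi_l_eq)
  next
    case (Some b)
    have h: "FF n i (Suc N) (v@[a]) = Some (v@[b])" using 0 Some by (simp add: FF_Suc)
    have "FF n i (Suc N) (v@[b]) = None" using 0 Some f_l_props[OF Some] f_l_twice[OF Some] by (simp add: FF_Suc)
    then show ?thesis using h Some by (simp add: maxit_FF[of n i "Suc N"] phi_l_eq)
  qed
next
  case (Suc d)
  then obtain v' where v': "FF n i N v = Some v'" "maxit (FF n i N) v' = eps_l n i a + d"
    by (cases "FF n i N v") (auto simp: maxit_FF[of n i N v])
  have "FF n i (Suc N) (v@[a]) = Some (v'@[a])" using Suc.prems v' by (simp add: FF_Suc)
  then show ?case using Suc.IH[OF v'(2)] by (simp add: maxit_FF[of n i "Suc N" "v@[a]"])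
qed

lemma lemD: "EE n i (Suc N) (u@[a]) = None \<Longrightarrow> eps_l n i a \<le> maxit (FF n i N) u \<and> EE n i N u = None"
  by (auto simp: EE_Suc eps_l_eq split: if_splits)

definition wt :: "nat \<Rightarrow> nat \<Rightarrow> letter list \<Rightarrow> int" where
  "wt n i w = sum_list (map (\<lambda>a. int (phi_l n i a) - int (eps_l n i a)) w)"

lemma lemH: "EE n i (length w) w = None \<Longrightarrow> int (maxit (FF n i (length w)) w) = wt n i w"
proof (induction w rule: rev_induct)
  case Nil then show ?case by (subst maxit_FF) (simp add: FF_0 wt_def)
next
  case (snoc a u)
  from lemD[of n i "length u" u a] snoc.prems
  have 1: "eps_l n i a \<le> maxit (FF n i (length u)) u" and 2: "EE n i (length u) u = None" by auto
  from snoc.IH[OF 2] have 3: "int (maxit (FF n i (length u)) u) = wt n i u" .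
  have "maxit (FF n i (Suc (length u))) (u@[a]) = (maxit (FF n i (length u)) u - eps_l n i a) + phi_l n i a"
    by (rule lemB) (use 1 in simp)
  then show ?case using 1 3 by (simp add: wt_def)
qed

lemma EE_prefix: "EE n i (length (w@v)) (w@v) = None \<Longrightarrow> EE n i (length w) w = None"
proof (induction v rule: rev_induct)
  case Nil then show ?case by simp
next
  case (snoc x v)
  then show ?case using lemD[of n i "length (w@v)" "w@v" x] by simp
qed

lemma hw_split:
  assumes "EE n i (length (pre@a#post)) (pre@a#post) = None"
  shows "int (eps_l n i a) \<le> wt n i pre" "0 \<le> wt n i pre"
proof -
  have "EE n i (length (pre@[a])) (pre@[a]) = None"
    using EE_prefix[of n i "pre@[a]" post] assms by simp
  then have "EE n i (Suc (length pre)) (pre@[a]) = None" by simp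
  from lemD[OF this] have 1: "eps_l n i a \<le> maxit (FF n i (length pre)) pre"
    and 2: "EE n i (length pre) pre = None" by auto
  from lemH[OF 2] 1 show "int (eps_l n i a) \<le> wt n i pre" "0 \<le> wt n i pre" by linarith+
qed

definition xl :: "nat \<Rightarrow> letter \<Rightarrow> int" where
  "xl j a = (if a = Unb j then 1 else if a = Bar j then -1 else 0)"
definition xw :: "nat \<Rightarrow> letter list \<Rightarrow> int" where
  "xw j w = sum_list (map (xl j) w)"

lemma letter_wt: "1 \<le> i \<Longrightarrow> i \<le> n \<Longrightarrow>
  int (phi_l n i a) - int (eps_l n i a) = (if i < n then xl i a - xl (Suc i) a else xl n a)"
  by (cases a) (auto simp: phi_l_eq eps_l_eq f_l_def e_l_def xl_def)

lemma wt_xw: "1 \<le> i \<Longrightarrow> i \<le> n \<Longrightarrow> wt n i w = (if i < n then xw i w - xw (Suc i) w else xw n w)"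
  by (induction w) (auto simp: wt_def xw_def letter_wt)

lemma xw_nonneg:
  assumes "\<And>l. 1 \<le> l \<Longrightarrow> l \<le> n \<Longrightarrow> 0 \<le> wt n l w"
  shows "1 \<le> j \<Longrightarrow> j \<le> n \<Longrightarrow> 0 \<le> xw j w"
proof -
  have "\<forall>j. n - j = d \<longrightarrow> 1 \<le> j \<longrightarrow> j \<le> n \<longrightarrow> 0 \<le> xw j w" for d
  proof (induction d)
    case 0 then show ?case using assms wt_xw by fastforce
  next
    case (Suc d)
    show ?case
    proof (intro allI impI)
      fix j assume j: "n - j = Suc d" "1 \<le> j" "j \<le> n"
      then have "0 \<le> xw (Suc j) w" using Suc.IH by auto
      moreover have "0 \<le> wt n j w" using assms j by auto
      moreover have "j < n" using j by auto
      ultimately show "0 \<le> xw j w" using wt_xw[of j n w] j by auto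
    qed
  qed
  then show "1 \<le> j \<Longrightarrow> j \<le> n \<Longrightarrow> 0 \<le> xw j w" by blast
qed

lemma xw_pos:
  assumes "\<And>l. 1 \<le> l \<Longrightarrow> l \<le> n \<Longrightarrow> 0 \<le> wt n l w" "1 \<le> j" "j \<le> n" "1 \<le> wt n j w"
  shows "1 \<le> xw j w"
proof (cases "j < n")
  case True
  with xw_nonneg[OF assms(1), of "Suc j"] assms wt_xw[of j n w] show ?thesis by auto
next
  case False
  with assms wt_xw[of j n w] show ?thesis by auto
qed

lemma xw_mem: "1 \<le> xw j w \<Longrightarrow> Unb j \<in> set w"
proof (induction w)
  case Nil then show ?case by (simp add: xw_def)
next
  case (Cons a w)
  then show ?case by (cases "a = Unb j") (auto simp: xw_def xl_def split: if_splits)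
qed

lemma compr_eq: "[f r. r \<leftarrow> xs, P r] = map f (filter P xs)"
  by (induction xs) auto

lemma column_eq: "column Y c = map (\<lambda>r. Y!r!c) (filter (\<lambda>r. c < length (Y!r)) [0..<length Y])"
  unfolding column_def by (rule compr_eq)

lemma reading_split:
  assumes yt: "is_young_tableau n Y" and r: "r < length Y" and c: "c < length (Y!r)"
  shows "\<exists>pre post. reading Y = pre @ Y!r!c # post \<and>
     (\<forall>b\<in>set pre. \<exists>r' c'. r' < length Y \<and> c' < length (Y!r') \<and> b = Y!r'!c' \<and> (c < c' \<or> (c' = c \<and> r' < r)))"
proof -
  let ?P = "\<lambda>c r. c < length (Y!r)"
  let ?col = "\<lambda>c. map (\<lambda>r. Y!r!c) (filter (?P c) [0..<length Y])"
  define W where "W = ncols Y"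
  have Yne: "Y \<noteq> []" using r by auto
  have "length (Y!r) \<le> length (Y!0)"
    using yt r unfolding is_young_tableau_def by (cases r) auto
  then have cW: "c < W" using c Yne by (simp add: W_def ncols_def hd_conv_nth)
  have u1: "[0..<W] = [0..<c] @ c # [Suc c..<W]"
    using upt_add_eq_append[of 0 c "W-c"] cW upt_conv_Cons[of c W] by simp
  have u2: "[0..<length Y] = [0..<r] @ r # [Suc r..<length Y]"
    using upt_add_eq_append[of 0 r "length Y-r"] r upt_conv_Cons[of r "length Y"] by simp
  define pre where "pre = concat (map ?col (rev [Suc c..<W])) @ map (\<lambda>r. Y!r!c) (filter (?P c) [0..<r])"
  define post where "post = map (\<lambda>r. Y!r!c) (filter (?P c) [Suc r..<length Y]) @ concat (map ?col (rev [0..<c]))"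
  have "reading Y = pre @ Y!r!c # post"
  proof -
    have "reading Y = concat (map ?col (rev [0..<W]))"
      unfolding reading_def W_def column_eq by simp
    also have "\<dots> = concat (map ?col (rev [Suc c..<W])) @ ?col c @ concat (map ?col (rev [0..<c]))"
      unfolding u1 by simp
    also have "?col c = map (\<lambda>r. Y!r!c) (filter (?P c) [0..<r]) @ Y!r!c # map (\<lambda>r. Y!r!c) (filter (?P c) [Suc r..<length Y])"
      unfolding u2 using c by simp
    finally show ?thesis by (simp add: pre_def post_def)
  qed
  moreover have "\<forall>b\<in>set pre. \<exists>r' c'. r' < length Y \<and> c' < length (Y!r') \<and> b = Y!r'!c' \<and> (c < c' \<or> (c' = c \<and> r' < r))"
  proof
    fix b assume "b \<in> set pre"
    then consider (A) c' r' where "c' \<in> set [Suc c..<W]" "r' < length Y" "c' < length (Y!r')" "b = Y!r'!c'"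
      | (B) r' where "r' < r" "c < length (Y!r')" "b = Y!r'!c"
      unfolding pre_def by auto
    then show "\<exists>r' c'. r' < length Y \<and> c' < length (Y!r') \<and> b = Y!r'!c' \<and> (c < c' \<or> (c' = c \<and> r' < r))"
    proof cases
      case A then show ?thesis by (intro exI[of _ r'] exI[of _ c']) auto
    next
      case B then show ?thesis using r by (intro exI[of _ r'] exI[of _ c]) auto
    qed
  qed
  ultimately show ?thesis by blast
qed

lemma yt_len: "is_young_tableau n Y \<Longrightarrow> r' \<le> r \<Longrightarrow> r < length Y \<Longrightarrow> length (Y!r) \<le> length (Y!r')"
  unfolding is_young_tableau_def by (cases "r' = r") auto

lemma rank_pos: "semistandard n Y \<Longrightarrow> r < length Y \<Longrightarrow> c < length (Y!r) \<Longrightarrow> 1 \<le> rank n (Y!r!c)"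
proof -
  assume a: "semistandard n Y" "r < length Y" "c < length (Y!r)"
  then have "in_alph n (Y!r!c)" unfolding semistandard_def is_young_tableau_def by auto
  then show ?thesis by (cases "Y!r!c") (auto simp: in_alph_def rank_def)
qed

lemma S1: "semistandard n Y \<Longrightarrow> r < length Y \<Longrightarrow> c < length (Y!r) \<Longrightarrow> r + 1 \<le> rank n (Y!r!c)"
proof (induction r)
  case 0 then show ?case using rank_pos by simp
next
  case (Suc r)
  have "c < length (Y!r)" using yt_len[of n Y r "Suc r"] Suc.prems unfolding semistandard_def by auto
  moreover have "lt_letter n (Y!r!c) (Y!Suc r!c)" using Suc.prems unfolding semistandard_def by blast
  ultimately show ?case using Suc by (simp add: lt_letter_def)
qed

lemma row_mono0: "semistandard n Y \<Longrightarrow> r < length Y \<Longrightarrow> c + d < length (Y!r) \<Longrightarrow> rank n (Y!r!c) \<le> rank n (Y!r!(c+d))"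
proof (induction d)
  case 0 then show ?case by simp
next
  case (Suc d)
  then have "le_letter n (Y!r!(c+d)) (Y!r!Suc (c+d))" unfolding semistandard_def by auto
  with Suc show ?case by (simp add: le_letter_def)
qed

lemma row_mono: "semistandard n Y \<Longrightarrow> r < length Y \<Longrightarrow> c \<le> c' \<Longrightarrow> c' < length (Y!r) \<Longrightarrow> rank n (Y!r!c) \<le> rank n (Y!r!c')"
  using row_mono0[of n Y r c "c' - c"] by simp

lemma col_mono0: "semistandard n Y \<Longrightarrow> Suc r + d < length Y \<Longrightarrow> c < length (Y!(Suc r + d)) \<Longrightarrow> rank n (Y!r!c) < rank n (Y!(Suc r + d)!c)"
proof (induction d)
  case 0 then show ?case unfolding semistandard_def lt_letter_def by auto
next
  case (Suc d)
  have "c < length (Y!(Suc r + d))" using yt_len[of n Y "Suc r + d" "Suc r + Suc d"] Suc.prems unfolding semistandard_def by auto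
  moreover have "lt_letter n (Y!(Suc r + d)!c) (Y!Suc (Suc r + d)!c)" using Suc.prems unfolding semistandard_def by auto
  ultimately show ?case using Suc by (simp add: lt_letter_def)
qed

lemma col_mono: "semistandard n Y \<Longrightarrow> r < r' \<Longrightarrow> r' < length Y \<Longrightarrow> c < length (Y!r') \<Longrightarrow> rank n (Y!r!c) < rank n (Y!r'!c)"
  using col_mono0[of n Y r "r' - Suc r" c] by simp

lemma S2: "semistandard n Y \<Longrightarrow> r \<le> r' \<Longrightarrow> c \<le> c' \<Longrightarrow> r' < length Y \<Longrightarrow> c' < length (Y!r') \<Longrightarrow> rank n (Y!r!c) \<le> rank n (Y!r'!c')"
proof -
  assume a: "semistandard n Y" "r \<le> r'" "c \<le> c'" "r' < length Y" "c' < length (Y!r')"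
  have "c' < length (Y!r)" using yt_len[of n Y r r'] a unfolding semistandard_def by auto
  then have 1: "rank n (Y!r!c) \<le> rank n (Y!r!c')" using row_mono a by auto
  have "rank n (Y!r!c') \<le> rank n (Y!r'!c')"
    using a col_mono[of n Y r r' c'] by (cases "r = r'") auto
  with 1 show ?thesis by simp
qed

lemma cell_induct:
  assumes step: "\<And>r c. r < length Y \<Longrightarrow> c < length (Y!r) \<Longrightarrow>
     (\<And>r' c'. r' < length Y \<Longrightarrow> c' < length (Y!r') \<Longrightarrow> (c < c' \<or> (c' = c \<and> r' < r)) \<Longrightarrow> Q r' c') \<Longrightarrow> Q r c"
    and bnd: "\<And>r c. r < length Y \<Longrightarrow> c < length (Y!r) \<Longrightarrow> c < W"
  shows "r < length Y \<Longrightarrow> c < length (Y!r) \<Longrightarrow> Q r c"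
proof -
  have "\<forall>c r. W - c = d \<longrightarrow> r < length Y \<longrightarrow> c < length (Y!r) \<longrightarrow> Q r c" for d
  proof (induction d rule: less_induct)
    case (less d)
    show ?case
    proof (intro allI impI)
      fix c r assume h: "W - c = d" "r < length Y" "c < length (Y!r)"
      from h(2,3) show "Q r c"
      proof (induction r rule: less_induct)
        case (less r)
        show ?case
        proof (rule step[OF less.prems])
          fix r' c' assume h2: "r' < length Y" "c' < length (Y!r')" "c < c' \<or> (c' = c \<and> r' < r)"
          show "Q r' c'"
          proof (cases "c < c'")
            case True
            have "c' < W" using bnd h2 by blast
            then have "W - c' < d" using True h(1) by linarith
            with less.prems(1) h2 show ?thesis using \<open>\<And>y. y < d \<Longrightarrow> _\<close> by blast
          next
            case False
            then show ?thesis using h2 less.IH by auto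
          qed
        qed
      qed
    qed
  qed
  then show "r < length Y \<Longrightarrow> c < length (Y!r) \<Longrightarrow> Q r c" by blast
qed

theorem lemma2p6:
  fixes n :: nat and Y :: "letter list list"
  assumes "n \<ge> 1"
    and "semistandard n Y"
    and "sp_highest_weight n Y"
  shows "\<forall>i r c. 1 \<le> i \<and> i \<le> n \<and> r < length Y \<and> c < length (Y ! r) \<longrightarrow>
            (Y ! r ! c = Unb i \<longrightarrow> r + 1 = i) \<and>
            (Y ! r ! c = Bar i \<longrightarrow> r + 1 > i)"
proof -
  note ss = assms(2)
  have yt: "is_young_tableau n Y" using ss unfolding semistandard_def by auto
  let ?Q = "\<lambda>r c. \<forall>i. 1 \<le> i \<and> i \<le> n \<longrightarrow> (Y ! r ! c = Unb i \<longrightarrow> r + 1 = i) \<and> (Y ! r ! c = Bar i \<longrightarrow> r + 1 > i)"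
  have bnd: "c < length (Y!0)" if "r < length Y" "c < length (Y!r)" for r c
    using yt_len[OF yt, of 0 r] that by auto
  have hw: "\<And>l. 1 \<le> l \<Longrightarrow> l \<le> n \<Longrightarrow> EE n l (length (reading Y)) (reading Y) = None"
    using assms(3) unfolding sp_highest_weight_def e_word_def EE_def by blast
  have step: "?Q r c" if h1: "r < length Y" and h2: "c < length (Y!r)"
    and IH: "\<And>r' c'. r' < length Y \<Longrightarrow> c' < length (Y!r') \<Longrightarrow> (c < c' \<or> (c' = c \<and> r' < r)) \<Longrightarrow> ?Q r' c'"
    for r c
  proof -
    obtain pre post where R: "reading Y = pre @ Y!r!c # post"
      and pre: "\<forall>b\<in>set pre. \<exists>r' c'. r' < length Y \<and> c' < length (Y!r') \<and> b = Y!r'!c' \<and> (c < c' \<or> (c' = c \<and> r' < r))"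
      using reading_split[OF yt h1 h2] by blast
    have ge: "int (eps_l n l (Y!r!c)) \<le> wt n l pre" and nn: "0 \<le> wt n l pre" if "1 \<le> l" "l \<le> n" for l
      using hw_split[of n l pre "Y!r!c" post] hw[OF that] R by auto
    have found: "\<exists>r' c'. r' < length Y \<and> c' < length (Y!r') \<and> Y!r'!c' = Unb j \<and> (c < c' \<or> (c' = c \<and> r' < r)) \<and> r' + 1 = j"
      if "1 \<le> j" "j \<le> n" "1 \<le> wt n j pre" for j
    proof -
      have "1 \<le> xw j pre" by (rule xw_pos[of n pre j]) (use nn that in auto)
      then have "Unb j \<in> set pre" by (rule xw_mem)
      with pre obtain r' c' where rc: "r' < length Y" "c' < length (Y!r')" "Unb j = Y!r'!c'" "c < c' \<or> (c' = c \<and> r' < r)"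
        by blast
      with IH[OF rc(1,2,4)] that show ?thesis by (intro exI[of _ r'] exI[of _ c']) auto
    qed
    show ?thesis
    proof (intro allI impI conjI)
      fix i assume i: "1 \<le> i \<and> i \<le> n"
      {
        assume a: "Y!r!c = Unb i"
        have "r + 1 \<le> i" using S1[OF ss h1 h2] a by (simp add: rank_def)
        moreover have "\<not> r + 1 < i"
        proof
          assume lt: "r + 1 < i"
          define j where "j = i - 1"
          have j: "1 \<le> j" "j < n" "i = Suc j" using lt i by (auto simp: j_def)
          have "eps_l n j (Y!r!c) = 1" using a j by (simp add: eps_l_eq e_l_def)
          with ge[of j] j have "1 \<le> wt n j pre" by auto
          from found[OF j(1) _ this] j obtain r' c' where
            rc: "r' < length Y" "c' < length (Y!r')" "Y!r'!c' = Unb j" "c < c' \<or> (c' = c \<and> r' < r)" "r' + 1 = j"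
            by auto
          show False
          proof (cases "c < c'")
            case True
            have "rank n (Y!r!c) \<le> rank n (Y!r'!c')"
              by (rule S2[OF ss]) (use rc lt j True in auto)
            then show False using a rc j by (simp add: rank_def)
          next
            case False
            then show False using rc lt j by auto
          qed
        qed
        ultimately show "r + 1 = i" by simp
      }
      {
        assume a: "Y!r!c = Bar i"
        show "r + 1 > i"
        proof (rule ccontr)
          assume le: "\<not> r + 1 > i"
          have "eps_l n i (Y!r!c) = 1" using a i by (simp add: eps_l_eq e_l_def)
          with ge[of i] i have "1 \<le> wt n i pre" by auto
          from found[of i] this i obtain r' c' where
            rc: "r' < length Y" "c' < length (Y!r')" "Y!r'!c' = Unb i" "c < c' \<or> (c' = c \<and> r' < r)" "r' + 1 = i"
            by auto
          show False
          proof (cases "c < c'")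
            case True
            have "rank n (Y!r!c) \<le> rank n (Y!r'!c')"
              by (rule S2[OF ss]) (use rc le True in auto)
            then show False using a rc i by (simp add: rank_def)
          next
            case False
            then show False using rc le by auto
          qed
        qed
      }
    qed
  qed
  have main: "?Q r c" if "r < length Y" "c < length (Y!r)" for r c
    by (rule cell_induct[where W = "length (Y!0)" and Q = ?Q, OF step bnd that]) auto
  then show ?thesis by blast
qed

end
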